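(* There is a function $\delta$ with $\delta(n)\to 0$ as $n\to\infty$ such that for every positive integer $n$ for which a regular Hadamard matrix of order $n$ exists, there exists a real orthogonal $(n+1)\times(n+1)$ matrix $M=(m_{i,j})$ with $(1-\delta(n))\frac{1}{\sqrt{n+1}}\le |m_{i,j}|\le (1+\delta(n))\frac{1}{\sqrt{n+1}}$ for all $i,j$ (i.e. all entries have modulus $(1+o(1))\frac{1}{\sqrt{n+1}}$).
   Context: A Hadamard matrix of order $n$ is an $n\times n$ matrix with entries in $\{+1,-1\}$ whose rows are pairwise orthogonal. It is called regular if all its row sums and all its column sums are equal (to one common value). *)

theory Defs
  imports Complex_Main
begin

text \<open>Square matrices of order n are represented as functions nat \<Rightarrow> nat \<Rightarrow> real,
  with only the entries with indices i, j < n being relevant.\<close>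

definition hadamard :: "nat \<Rightarrow> (nat \<Rightarrow> nat \<Rightarrow> real) \<Rightarrow> bool" where
  "hadamard n H \<longleftrightarrow>
     (\<forall>i<n. \<forall>j<n. H i j = 1 \<or> H i j = -1) \<and>
     (\<forall>i<n. \<forall>k<n. i \<noteq> k \<longrightarrow> (\<Sum>j<n. H i j * H k j) = 0)"

definition regular_hadamard :: "nat \<Rightarrow> (nat \<Rightarrow> nat \<Rightarrow> real) \<Rightarrow> bool" where
  "regular_hadamard n H \<longleftrightarrow> hadamard n H \<and>
     (\<exists>c. (\<forall>i<n. (\<Sum>j<n. H i j) = c) \<and> (\<forall>j<n. (\<Sum>i<n. H i j) = c))"

definition real_orthogonal :: "nat \<Rightarrow> (nat \<Rightarrow> nat \<Rightarrow> real) \<Rightarrow> bool" where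
  "real_orthogonal n M \<longleftrightarrow>
     (\<forall>i<n. \<forall>k<n. (\<Sum>j<n. M i j * M k j) = (if i = k then 1 else 0))"

end

theory Submission
  imports Defs
begin

lemma lim: "(\<lambda>n. 8 / sqrt (real n)) \<longlonglongrightarrow> 0"
proof -
  have "filterlim (\<lambda>n. sqrt (real n)) at_top sequentially"
    using filterlim_compose[OF sqrt_at_top filterlim_real_sequentially] .
  then show ?thesis by (intro tendsto_divide_0[OF tendsto_const] filterlim_at_top_imp_at_infinity)
qed
lemma entry:
  fixes s t h e :: real
  assumes s1: "s \<ge> 1" and tt: "t\<^sup>2 = s\<^sup>2 + 1" and t0: "t > 0"
    and h: "\<bar>h\<bar> = 1" and e: "\<bar>e\<bar> = 1"
  shows "(1 - 8/s) * (1/t) \<le> \<bar>h/s + (1/t - e)/s\<^sup>2\<bar> \<and> \<bar>h/s + (1/t - e)/s\<^sup>2\<bar> \<le> (1 + 8/s) * (1/t)"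
proof -
  have ts: "t \<le> s + 1"
  proof (rule power2_le_imp_le)
    show "t\<^sup>2 \<le> (s + 1)\<^sup>2" using tt s1 by (simp add: power2_eq_square algebra_simps)
  qed (use s1 in simp)
  have st: "s \<le> t"
  proof (rule power2_le_imp_le)
    show "s\<^sup>2 \<le> t\<^sup>2" using tt by simp
  qed (use t0 in simp)
  have it: "1/t \<le> 1" using st s1 by simp
  have d: "\<bar>(1/t - e)/s\<^sup>2\<bar> \<le> 2/s\<^sup>2" using it e t0 s1
  proof -
    have "\<bar>1/t\<bar> \<le> 1" using it t0 by simp
    then have "\<bar>1/t - e\<bar> \<le> 2" using abs_triangle_ineq4[of "1/t" e] e by linarith
    then show ?thesis using s1 by (simp add: abs_div divide_right_mono)
  qed
  have hs: "\<bar>h/s\<bar> = 1/s" using h s1 by simp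
  have up: "\<bar>h/s + (1/t - e)/s\<^sup>2\<bar> \<le> 1/s + 2/s\<^sup>2" using d hs by linarith
  have lo: "\<bar>h/s + (1/t - e)/s\<^sup>2\<bar> \<ge> 1/s - 2/s\<^sup>2" using d hs by linarith
  have a1: "1/s + 2/s\<^sup>2 \<le> (1 + 8/s) * (1/t)"
  proof -
    have "t*s \<le> s*s + s" using mult_right_mono[OF ts, of s] s1 by (simp add: algebra_simps)
    then have "t * s + 2 * t \<le> s*s + 8 * s" using ts s1 by linarith
    moreover have "(1/s + 2/s\<^sup>2) * (s\<^sup>2*t) = t * s + 2 * t" using s1 t0 by (simp add: field_simps power2_eq_square)
    moreover have "((1 + 8/s) * (1/t)) * (s\<^sup>2*t) = s*s + 8 * s" using s1 t0 by (simp add: field_simps power2_eq_square)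
    ultimately have "(1/s + 2/s\<^sup>2) * (s\<^sup>2*t) \<le> ((1 + 8/s) * (1/t)) * (s\<^sup>2*t)" by linarith
    moreover have "0 < s\<^sup>2*t" using s1 t0 by simp
    ultimately show ?thesis by (rule mult_right_le_imp_le)
  qed
  have a2: "(1 - 8/s) * (1/t) \<le> 1/s - 2/s\<^sup>2"
  proof -
    have "s*s \<le> t*s" using mult_right_mono[OF st, of s] s1 by simp
    then have "s*s - 8*s \<le> t*s - 2*t" using ts st s1 by linarith
    moreover have "(1/s - 2/s\<^sup>2) * (s\<^sup>2*t) = t * s - 2 * t" using s1 t0 by (simp add: field_simps power2_eq_square)
    moreover have "((1 - 8/s) * (1/t)) * (s\<^sup>2*t) = s*s - 8 * s" using s1 t0 by (simp add: field_simps power2_eq_square)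
    ultimately have "((1 - 8/s) * (1/t)) * (s\<^sup>2*t) \<le> (1/s - 2/s\<^sup>2) * (s\<^sup>2*t)" by linarith
    moreover have "0 < s\<^sup>2*t" using s1 t0 by simp
    ultimately show ?thesis by (rule mult_right_le_imp_le)
  qed
  show ?thesis using up lo a1 a2 by linarith
qed

lemma expand:
  fixes a b :: "nat \<Rightarrow> real"
  shows "(\<Sum>j<n. (a j + q) * (b j + q)) = (\<Sum>j<n. a j * b j) + q * (\<Sum>j<n. a j) + q * (\<Sum>j<n. b j) + real n * q\<^sup>2"
proof -
  have "(\<Sum>j<n. (a j + q) * (b j + q)) = (\<Sum>j<n. a j * b j + q * a j + q * b j + q\<^sup>2)"
    by (intro sum.cong) (auto simp: algebra_simps power2_eq_square)
  then show ?thesis by (simp add: sum.distrib sum_distrib_left)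
qed

lemma csq:
  fixes H :: "nat \<Rightarrow> nat \<Rightarrow> real"
  assumes G: "\<And>i k. i < n \<Longrightarrow> k < n \<Longrightarrow> (\<Sum>j<n. H i j * H k j) = (if i = k then real n else 0)"
    and col: "\<And>j. j < n \<Longrightarrow> (\<Sum>i<n. H i j) = c"
  shows "real n * c\<^sup>2 = real n * real n"
proof -
  have "(\<Sum>j<n. (\<Sum>i<n. H i j) * (\<Sum>k<n. H k j)) = (\<Sum>j<n. c * c)"
    by (intro sum.cong refl) (simp add: col)
  then have "real n * c\<^sup>2 = (\<Sum>j<n. (\<Sum>i<n. H i j) * (\<Sum>k<n. H k j))"
    by (simp add: power2_eq_square)
  also have "\<dots> = (\<Sum>j<n. \<Sum>i<n. \<Sum>k<n. H i j * H k j)"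
    by (simp only: sum_product)
  also have "\<dots> = (\<Sum>i<n. \<Sum>j<n. \<Sum>k<n. H i j * H k j)"
    by (rule sum.swap)
  also have "\<dots> = (\<Sum>i<n. \<Sum>k<n. \<Sum>j<n. H i j * H k j)"
    by (rule sum.cong[OF refl]) (rule sum.swap)
  also have "\<dots> = (\<Sum>i<n. \<Sum>k<n. (if i = k then real n else 0))"
    by (intro sum.cong refl) (simp add: G)
  also have "\<dots> = (\<Sum>i<n. real n)"
    by (intro sum.cong refl) (simp add: sum.delta)
  also have "\<dots> = real n * real n" by simp
  finally show ?thesis .
qed

lemma shift: "(\<Sum>j<n+1. g j) = g 0 + (\<Sum>j<n. g (Suc j))" for g :: "nat \<Rightarrow> real"
  using sum.lessThan_Suc_shift[of g n] by simp

theorem proposition3p5: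
  shows "\<exists>\<delta> :: nat \<Rightarrow> real. \<delta> \<longlonglongrightarrow> 0 \<and>
    (\<forall>n>0. (\<exists>H. regular_hadamard n H) \<longrightarrow>
       (\<exists>M. real_orthogonal (n + 1) M \<and>
          (\<forall>i<n + 1. \<forall>j<n + 1.
             (1 - \<delta> n) * (1 / sqrt (real n + 1)) \<le> \<bar>M i j\<bar> \<and>
             \<bar>M i j\<bar> \<le> (1 + \<delta> n) * (1 / sqrt (real n + 1)))))"
proof (rule exI[of _ "\<lambda>n. 8 / sqrt (real n)"], intro conjI allI impI)
  show "(\<lambda>n. 8 / sqrt (real n)) \<longlonglongrightarrow> 0" by (rule lim)
next
  fix n :: nat assume n0: "n > 0" and "\<exists>H. regular_hadamard n H"
  then obtain H :: "nat \<Rightarrow> nat \<Rightarrow> real" where RH: "regular_hadamard n H" by blast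
  have ent: "\<And>i j. i<n \<Longrightarrow> j<n \<Longrightarrow> H i j = 1 \<or> H i j = -1"
    using RH unfolding regular_hadamard_def hadamard_def by blast
  have orth: "\<And>i k. i<n \<Longrightarrow> k<n \<Longrightarrow> i \<noteq> k \<Longrightarrow> (\<Sum>j<n. H i j * H k j) = 0"
    using RH unfolding regular_hadamard_def hadamard_def by blast
  obtain c :: real where row: "\<And>i. i<n \<Longrightarrow> (\<Sum>j<n. H i j) = c"
    and col: "\<And>j. j<n \<Longrightarrow> (\<Sum>i<n. H i j) = c"
    using RH unfolding regular_hadamard_def by blast
  have G: "(\<Sum>j<n. H i j * H k j) = (if i = k then real n else 0)" if "i<n" "k<n" for i k
  proof (cases "i = k")
    case True
    have "(\<Sum>j<n. H i j * H k j) = (\<Sum>j<n. 1)"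
    proof (rule sum.cong[OF refl])
      fix j assume "j \<in> {..<n}"
      then show "H i j * H k j = 1" using ent[of i j] True that by auto
    qed
    then show ?thesis using True by simp
  qed (use orth that in auto)
  have c2: "c\<^sup>2 = real n" using csq[of n H c, OF G col] n0 by simp
  define s where "s = sqrt (real n)"
  define t where "t = sqrt (real n + 1)"
  define r where "r = 1 / t"
  define e where "e = c / s"
  define q where "q = (r - e) / real n"
  have s1: "s \<ge> 1" using n0 unfolding s_def by simp
  have ss: "s\<^sup>2 = real n" unfolding s_def by simp
  have tt: "t\<^sup>2 = real n + 1" unfolding t_def by simp
  have t0: "t > 0" unfolding t_def by simp
  have tt2: "t\<^sup>2 = s\<^sup>2 + 1" using tt ss by simp
  have e2: "e\<^sup>2 = 1" using c2 ss s1 n0 unfolding e_def by (simp add: power_divide)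
  have ea: "\<bar>e\<bar> = 1" using e2 by (auto simp: power2_eq_1_iff)
  have r2: "r\<^sup>2 * (real n + 1) = 1" using tt t0 unfolding r_def by (simp add: power_divide)
  define M where "M = (\<lambda>i j. if i = 0 then (if j = 0 then - r else r)
                         else if j = 0 then r else H (i - 1) (j - 1) / s + q)"
  have rsum: "(\<Sum>j<n. H i j / s + q) = r" if "i < n" for i
  proof -
    have "(\<Sum>j<n. H i j / s + q) = c / s + real n * q"
      using row[OF that] by (simp add: sum.distrib sum_divide_distrib[symmetric])
    also have "\<dots> = r" using n0 unfolding q_def e_def by simp
    finally show ?thesis .
  qed
  have inner: "(\<Sum>j<n. (H i j / s + q) * (H k j / s + q)) = (if i = k then 1 else 0) - r\<^sup>2"
    if "i < n" "k < n" for i k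
  proof -
    have "(\<Sum>j<n. (H i j / s + q) * (H k j / s + q)) =
       (\<Sum>j<n. H i j * H k j) / s\<^sup>2 + q * (c / s) + q * (c / s) + real n * q\<^sup>2"
      using expand[of "\<lambda>j. H i j / s" q "\<lambda>j. H k j / s" n] row[OF that(1)] row[OF that(2)]
      by (simp add: sum_divide_distrib[symmetric] power2_eq_square)
    also have "\<dots> = (if i = k then 1 else 0) + 2 * q * e + real n * q\<^sup>2"
      using G[OF that] ss n0 unfolding e_def by simp
    finally have A: "(\<Sum>j<n. (H i j / s + q) * (H k j / s + q)) = (if i = k then 1 else 0) + (2 * q * e + real n * q\<^sup>2)"
      by simp
    have "2 * q * e + real n * q\<^sup>2 = (r\<^sup>2 - e\<^sup>2) / real n"
      using n0 unfolding q_def by (simp add: field_simps power2_eq_square)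
    also have "\<dots> = - r\<^sup>2"
      using r2 e2 n0 by (simp add: field_simps)
    finally show ?thesis using A by simp
  qed
  show "\<exists>M. real_orthogonal (n + 1) M \<and>
          (\<forall>i<n + 1. \<forall>j<n + 1.
             (1 - 8 / sqrt (real n)) * (1 / sqrt (real n + 1)) \<le> \<bar>M i j\<bar> \<and>
             \<bar>M i j\<bar> \<le> (1 + 8 / sqrt (real n)) * (1 / sqrt (real n + 1)))"
  proof (intro exI conjI)
    show "real_orthogonal (n + 1) M"
      unfolding real_orthogonal_def
    proof (intro allI impI)
      fix i k assume i: "i < n + 1" and k: "k < n + 1"
      show "(\<Sum>j<n + 1. M i j * M k j) = (if i = k then 1 else 0)"
      proof (cases i)
        case 0
        then show ?thesis
        proof (cases k)
          case 0
          then show ?thesis using \<open>i = 0\<close> r2 unfolding shift by (simp add: M_def power2_eq_square algebra_simps)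
        next
          case (Suc k')
          have "(\<Sum>j<n + 1. M i j * M k j) = - r * r + r * (\<Sum>j<n. H k' j / s + q)"
            using 0 Suc unfolding shift by (simp add: M_def sum_distrib_left)
          then show ?thesis using rsum[of k'] Suc k 0 by simp
        qed
      next
        case (Suc i')
        then show ?thesis
        proof (cases k)
          case 0
          have "(\<Sum>j<n + 1. M i j * M k j) = r * (- r) + r * (\<Sum>j<n. H i' j / s + q)"
            using 0 Suc unfolding shift by (simp add: M_def sum_distrib_left mult.commute)
          then show ?thesis using rsum[of i'] Suc i 0 by simp
        next
          case (Suc k')
          have "(\<Sum>j<n + 1. M i j * M k j) = r * r + (\<Sum>j<n. (H i' j / s + q) * (H k' j / s + q))"
            using Suc \<open>i = Suc i'\<close> unfolding shift by (simp add: M_def)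
          then show ?thesis using inner[of i' k'] Suc \<open>i = Suc i'\<close> i k
            by (simp add: power2_eq_square)
        qed
      qed
    qed
  next
    show "\<forall>i<n + 1. \<forall>j<n + 1.
             (1 - 8 / sqrt (real n)) * (1 / sqrt (real n + 1)) \<le> \<bar>M i j\<bar> \<and>
             \<bar>M i j\<bar> \<le> (1 + 8 / sqrt (real n)) * (1 / sqrt (real n + 1))"
    proof (intro allI impI)
    fix i j assume i: "i < n + 1" and j: "j < n + 1"
    have "(1 - 8 / s) * (1 / t) \<le> \<bar>M i j\<bar> \<and> \<bar>M i j\<bar> \<le> (1 + 8 / s) * (1 / t)"
    proof (cases "i = 0 \<or> j = 0")
      case True
      then have "\<bar>M i j\<bar> = 1 / t" using t0 by (auto simp: M_def r_def)
      moreover have "8 / s \<ge> 0" using s1 by simp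
      ultimately show ?thesis using t0
        by (simp add: divide_right_mono mult_le_cancel_right1)
    next
      case False
      then have "M i j = H (i - 1) (j - 1) / s + (1 / t - e) / s\<^sup>2"
        by (simp add: M_def q_def r_def ss)
      moreover have "\<bar>H (i - 1) (j - 1)\<bar> = 1" proof -
        have "i - 1 < n" "j - 1 < n" using i j False by auto
        then show ?thesis using ent[of "i - 1" "j - 1"] by auto
      qed
      ultimately show ?thesis using entry[OF s1 tt2 t0 _ ea] by simp
    qed
    then show "(1 - 8 / sqrt (real n)) * (1 / sqrt (real n + 1)) \<le> \<bar>M i j\<bar> \<and>
      \<bar>M i j\<bar> \<le> (1 + 8 / sqrt (real n)) * (1 / sqrt (real n + 1))"
      unfolding s_def t_def by auto
    qed
  qed
qed

end
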